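(* Let $Z\subset\mathbb{S}_3$ be a finite nonempty set of points. Then the following are equivalent: (i) $\alpha(Z)=\alpha(2Z)=\alpha(3Z)=\alpha(4Z)=1$; (ii) $Z=\{Q\}$ where $Q$ is the point $E_i\cap\widetilde{L_{ij}}$ for some distinct $i,j\in\{1,2,3\}$.
   Context: Let $P_1,P_2,P_3\in\mathbb{P}^2(\mathbb{C})$ be three general points and $f\colon\mathbb{S}_3\to\mathbb{P}^2$ the blow-up at them, with exceptional curves $E_i=f^{-1}(P_i)$; let $H$ be the pullback of the class of a line and $\mathbb{L}_3=3H-E_1-E_2-E_3=-K_{\mathbb{S}_3}$. For distinct $i,j$, $L_{ij}$ is the line through $P_i,P_j$ and $\widetilde{L_{ij}}$ its proper transform. For a finite set $Z\subset\mathbb{S}_3$ with ideal sheaf $\mathcal{I}_Z$ and a positive integer $m$, $\alpha(mZ)=\min\{d\ge 0:\ H^0(\mathbb{S}_3,d\mathbb{L}_3\otimes\mathcal{I}_Z^{(m)})\neq 0\}$, i.e. the least $d$ such that some effective divisor $D\in|d\mathbb{L}_3|$ has multiplicity at least $m$ at every point of $Z$. *)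

theory Defs
  imports "HOL-Computational_Algebra.Polynomial"
begin

(* Homogeneous coordinates: vectors of C^3 as triples. *)
type_synonym cpt = "complex \<times> complex \<times> complex"

definition vadd :: "cpt \<Rightarrow> cpt \<Rightarrow> cpt" where
  "vadd = (\<lambda>(a,b,c) (x,y,z). (a+x, b+y, c+z))"

definition smul :: "complex \<Rightarrow> cpt \<Rightarrow> cpt" where
  "smul l = (\<lambda>(x,y,z). (l*x, l*y, l*z))"

definition det3 :: "cpt \<Rightarrow> cpt \<Rightarrow> cpt \<Rightarrow> complex" where
  "det3 = (\<lambda>(a1,a2,a3) (b1,b2,b3) (c1,c2,c3).
      a1*(b2*c3 - b3*c2) - a2*(b1*c3 - b3*c1) + a3*(b1*c2 - b2*c1))"

(* canonical representative of a point of P^2: first nonzero coordinate equals 1 *)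
definition normalized :: "cpt \<Rightarrow> bool" where
  "normalized = (\<lambda>(x,y,z). x = 1 \<or> (x = 0 \<and> y = 1) \<or> (x = 0 \<and> y = 0 \<and> z = 1))"

definition pnorm :: "cpt \<Rightarrow> cpt" where
  "pnorm = (\<lambda>(x,y,z). if x \<noteq> 0 then (1, y/x, z/x) else if y \<noteq> 0 then (0, 1, z/y)
                      else (0, 0, 1))"

(* A form of degree n in x,y,z is a coefficient function c a b e (coefficient of
   x^a y^b z^e), vanishing off a+b+e = n. *)
definition hmonos :: "nat \<Rightarrow> (nat \<times> nat \<times> nat) set" where
  "hmonos n = {(a,b,e). a + b + e = n}"

definition hform :: "nat \<Rightarrow> (nat \<Rightarrow> nat \<Rightarrow> nat \<Rightarrow> complex) \<Rightarrow> bool" where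
  "hform n c \<longleftrightarrow> (\<forall>a b e. a + b + e \<noteq> n \<longrightarrow> c a b e = 0)"

(* F(q + s v) as a univariate polynomial in s *)
definition pencil :: "nat \<Rightarrow> (nat \<Rightarrow> nat \<Rightarrow> nat \<Rightarrow> complex) \<Rightarrow> cpt \<Rightarrow> cpt \<Rightarrow> complex poly" where
  "pencil n c q v = (\<Sum>(a,b,e)\<in>hmonos n.
      smult (c a b e) ([:fst q, fst v:] ^ a * [:fst (snd q), fst (snd v):] ^ b
                       * [:snd (snd q), snd (snd v):] ^ e))"

(* F(p + u (r + t w)) as a bivariate polynomial: outer variable u, inner variable t *)
definition bipencil :: "nat \<Rightarrow> (nat \<Rightarrow> nat \<Rightarrow> nat \<Rightarrow> complex) \<Rightarrow> cpt \<Rightarrow> cpt \<Rightarrow> cpt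
                         \<Rightarrow> complex poly poly" where
  "bipencil n c p r w = (\<Sum>(a,b,e)\<in>hmonos n.
      smult [:c a b e:] ([: [:fst p:], [:fst r, fst w:] :] ^ a
                       * [: [:fst (snd p):], [:fst (snd r), fst (snd w):] :] ^ b
                       * [: [:snd (snd p):], [:snd (snd r), snd (snd w):] :] ^ e))"

definition mult_plane_ge :: "nat \<Rightarrow> (nat \<Rightarrow> nat \<Rightarrow> nat \<Rightarrow> complex) \<Rightarrow> cpt \<Rightarrow> nat \<Rightarrow> bool" where
  "mult_plane_ge n c q m \<longleftrightarrow> (\<forall>v. monom 1 m dvd pencil n c q v)"

definition oth1 :: "nat \<Rightarrow> nat" where "oth1 i = (if i = 1 then 2 else 1)"
definition oth2 :: "nat \<Rightarrow> nat" where "oth2 i = (if i = 3 then 2 else 3)"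

(* Points of S_3: Pl q = a point [q] of P^2 other than P_1,P_2,P_3 (q normalized);
   Ex i r = the point of E_i corresponding to the tangent direction at P_i of the line
   through P_i and [r], where [r] is a (normalized) point of the opposite line L_jk. *)
datatype s3pt = Pl cpt | Ex nat cpt

definition in_S3 :: "(nat \<Rightarrow> cpt) \<Rightarrow> s3pt \<Rightarrow> bool" where
  "in_S3 P Q = (case Q of
      Pl q \<Rightarrow> normalized q \<and> (\<forall>i\<in>{1,2,3}. \<not> (\<exists>l. q = smul l (P i)))
    | Ex i r \<Rightarrow> i \<in> {1,2,3} \<and> normalized r \<and>
                (\<exists>a b. r = vadd (smul a (P (oth1 i))) (smul b (P (oth2 i)))))"

(* second vector spanning the opposite line, independent of r *)
definition chartw :: "(nat \<Rightarrow> cpt) \<Rightarrow> nat \<Rightarrow> cpt \<Rightarrow> cpt" where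
  "chartw P i r = (if \<exists>l. r = smul l (P (oth1 i)) then P (oth2 i) else P (oth1 i))"

(* D in |d L_3| given by the plane curve c of degree 3d with mult >= d at each P_i:
   D = strict transform + sum (mult_{P_i} - d) E_i. mult_ge P d c m Q: mult_Q D >= m.
   At a point of E_i we use the blow-up chart (u,t) -> [P_i + u (r + t w)], where the
   local equation of D is F(P_i + u(r + t w)) / u^d. *)
definition mult_ge :: "(nat \<Rightarrow> cpt) \<Rightarrow> nat \<Rightarrow> (nat \<Rightarrow> nat \<Rightarrow> nat \<Rightarrow> complex) \<Rightarrow> nat
                        \<Rightarrow> s3pt \<Rightarrow> bool" where
  "mult_ge P d c m Q = (case Q of
      Pl q \<Rightarrow> mult_plane_ge (3*d) c q m
    | Ex i r \<Rightarrow> (let G = bipencil (3*d) c (P i) r (chartw P i r) in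
                 \<forall>j l. j + l < m \<longrightarrow> coeff (coeff G (j + d)) l = 0))"

(* nonzero sections of d L_3 = -d K *)
definition in_linsys :: "(nat \<Rightarrow> cpt) \<Rightarrow> nat \<Rightarrow> (nat \<Rightarrow> nat \<Rightarrow> nat \<Rightarrow> complex) \<Rightarrow> bool" where
  "in_linsys P d c \<longleftrightarrow> hform (3*d) c \<and> c \<noteq> (\<lambda>_ _ _. 0) \<and>
      (\<forall>i\<in>{1,2,3}. mult_plane_ge (3*d) c (P i) d)"

definition alpha :: "(nat \<Rightarrow> cpt) \<Rightarrow> nat \<Rightarrow> s3pt set \<Rightarrow> nat" where
  "alpha P m Z = (LEAST d. \<exists>c. in_linsys P d c \<and> (\<forall>Q\<in>Z. mult_ge P d c m Q))"

end

theory Submission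
  imports Defs
begin

definition cf :: "(nat \<Rightarrow> nat \<Rightarrow> nat \<Rightarrow> complex) \<Rightarrow> nat \<times> nat \<times> nat \<Rightarrow> complex" where
  "cf c m = c (fst m) (fst (snd m)) (snd (snd m))"

definition addm :: "nat \<times> nat \<times> nat \<Rightarrow> nat \<times> nat \<times> nat \<Rightarrow> nat \<times> nat \<times> nat" where
  "addm m1 m2 = (fst m1 + fst m2, fst (snd m1) + fst (snd m2), snd (snd m1) + snd (snd m2))"

definition mon :: "'a::comm_ring_1 \<Rightarrow> 'a \<Rightarrow> 'a \<Rightarrow> nat \<times> nat \<times> nat \<Rightarrow> 'a" where
  "mon X Y Z m = X ^ fst m * Y ^ fst (snd m) * Z ^ snd (snd m)"

definition gsum :: "(complex \<Rightarrow> 'a::comm_ring_1) \<Rightarrow> nat \<Rightarrow> (nat \<Rightarrow> nat \<Rightarrow> nat \<Rightarrow> complex)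
   \<Rightarrow> 'a \<Rightarrow> 'a \<Rightarrow> 'a \<Rightarrow> 'a" where
  "gsum emb n c X Y Z = (\<Sum>m\<in>hmonos n. emb (cf c m) * mon X Y Z m)"

definition fmul :: "nat \<Rightarrow> (nat \<Rightarrow> nat \<Rightarrow> nat \<Rightarrow> complex) \<Rightarrow> nat \<Rightarrow> (nat \<Rightarrow> nat \<Rightarrow> nat \<Rightarrow> complex)
   \<Rightarrow> (nat \<Rightarrow> nat \<Rightarrow> nat \<Rightarrow> complex)" where
  "fmul n1 c1 n2 c2 = (\<lambda>a b e. \<Sum>pr\<in>{pr. pr \<in> hmonos n1 \<times> hmonos n2 \<and> addm (fst pr) (snd pr) = (a,b,e)}.
       cf c1 (fst pr) * cf c2 (snd pr))"

lemma finite_hmonos: "finite (hmonos n)"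
proof -
  have "hmonos n \<subseteq> {0..n} \<times> {0..n} \<times> {0..n}" by (auto simp: hmonos_def)
  then show ?thesis by (rule finite_subset) auto
qed

lemma mon_addm: "mon X Y Z (addm m1 m2) = mon X Y Z m1 * mon X Y Z m2"
  by (simp add: mon_def addm_def power_add algebra_simps)

lemma addm_hmonos: "m1 \<in> hmonos n1 \<Longrightarrow> m2 \<in> hmonos n2 \<Longrightarrow> addm m1 m2 \<in> hmonos (n1+n2)"
  by (auto simp: hmonos_def addm_def)

lemma emb_sum:
  assumes "\<And>x y. emb (x + y) = emb x + emb y" "emb 0 = 0"
  shows "emb (sum f A) = (\<Sum>a\<in>A. emb (f a))"
proof (cases "finite A")
  case True then show ?thesis by (induction A rule: finite_induct) (auto simp: assms)
qed (simp add: assms)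

lemma gsum_fmul:
  fixes emb :: "complex \<Rightarrow> 'a::comm_ring_1"
  assumes add: "\<And>x y. emb (x + y) = emb x + emb y" and z: "emb 0 = 0"
    and mul: "\<And>x y. emb (x * y) = emb x * emb y"
  shows "gsum emb (n1+n2) (fmul n1 c1 n2 c2) X Y Z = gsum emb n1 c1 X Y Z * gsum emb n2 c2 X Y Z"
proof -
  let ?S = "hmonos n1 \<times> hmonos n2"
  let ?h = "\<lambda>pr. emb (cf c1 (fst pr) * cf c2 (snd pr)) * mon X Y Z (addm (fst pr) (snd pr))"
  have fS: "finite ?S" by (simp add: finite_hmonos)
  have "gsum emb (n1+n2) (fmul n1 c1 n2 c2) X Y Z =
     (\<Sum>m\<in>hmonos (n1+n2). sum ?h {pr. pr \<in> ?S \<and> addm (fst pr) (snd pr) = m})"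
    unfolding gsum_def
  proof (rule sum.cong[OF refl])
    fix m assume "m \<in> hmonos (n1+n2)"
    have "emb (cf (fmul n1 c1 n2 c2) m) = (\<Sum>pr\<in>{pr. pr \<in> ?S \<and> addm (fst pr) (snd pr) = m}.
        emb (cf c1 (fst pr) * cf c2 (snd pr)))"
      unfolding cf_def fmul_def by (simp add: emb_sum[OF add z])
    then show "emb (cf (fmul n1 c1 n2 c2) m) * mon X Y Z m = sum ?h {pr. pr \<in> ?S \<and> addm (fst pr) (snd pr) = m}"
      by (simp add: sum_distrib_right)
  qed
  also have "\<dots> = sum ?h ?S"
    by (rule sum.group[OF fS finite_hmonos]) (auto intro: addm_hmonos)
  also have "\<dots> = (\<Sum>m1\<in>hmonos n1. \<Sum>m2\<in>hmonos n2. (emb (cf c1 m1) * mon X Y Z m1) * (emb (cf c2 m2) * mon X Y Z m2))"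
    by (simp add: sum.cartesian_product mul mon_addm mult_ac split_def)
  also have "\<dots> = gsum emb n1 c1 X Y Z * gsum emb n2 c2 X Y Z"
    unfolding gsum_def by (simp add: sum_product)
  finally show ?thesis .
qed

lemma hform_fmul: "hform (n1+n2) (fmul n1 c1 n2 c2)"
  unfolding hform_def fmul_def
  by (auto intro!: sum.neutral simp: hmonos_def addm_def)

definition ehom :: "(complex \<Rightarrow> 'a::comm_ring_1) \<Rightarrow> bool" where
  "ehom emb \<longleftrightarrow> (\<forall>x y. emb (x + y) = emb x + emb y) \<and> (\<forall>x y. emb (x * y) = emb x * emb y)
     \<and> emb 0 = 0 \<and> emb 1 = 1"

lemma ehom_id: "ehom (\<lambda>x. x)" by (simp add: ehom_def)
lemma ehom_C: "ehom (\<lambda>x. [:x:])" by (simp add: ehom_def)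
lemma ehom_CC: "ehom (\<lambda>x. [:[:x:]:])" by (simp add: ehom_def one_pCons)

lemma gsum_fmul':
  "ehom emb \<Longrightarrow> gsum emb (n1+n2) (fmul n1 c1 n2 c2) X Y Z = gsum emb n1 c1 X Y Z * gsum emb n2 c2 X Y Z"
  by (rule gsum_fmul) (auto simp: ehom_def)

definition fone :: "nat \<Rightarrow> nat \<Rightarrow> nat \<Rightarrow> complex" where
  "fone a b e = (if a = 0 \<and> b = 0 \<and> e = 0 then 1 else 0)"

primrec fpow :: "nat \<Rightarrow> (nat \<Rightarrow> nat \<Rightarrow> nat \<Rightarrow> complex) \<Rightarrow> nat \<Rightarrow> (nat \<Rightarrow> nat \<Rightarrow> nat \<Rightarrow> complex)" where
  "fpow n c 0 = fone"
| "fpow n c (Suc k) = fmul n c (n*k) (fpow n c k)"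

lemma hmonos0: "hmonos 0 = {(0,0,0)}" by (auto simp: hmonos_def)

lemma gsum_fone: "ehom emb \<Longrightarrow> gsum emb 0 fone X Y Z = 1"
  by (simp add: gsum_def hmonos0 cf_def fone_def mon_def ehom_def)

lemma gsum_fpow: "ehom emb \<Longrightarrow> gsum emb (n*k) (fpow n c k) X Y Z = gsum emb n c X Y Z ^ k"
proof (induction k)
  case 0 then show ?case by (simp add: gsum_fone)
next
  case (Suc k)
  have "gsum emb (n * Suc k) (fpow n c (Suc k)) X Y Z = gsum emb (n + n*k) (fmul n c (n*k) (fpow n c k)) X Y Z"
    by simp
  also have "\<dots> = gsum emb n c X Y Z * gsum emb (n*k) (fpow n c k) X Y Z" by (rule gsum_fmul'[OF Suc.prems])
  finally show ?case using Suc by simp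
qed

lemma hform_fone: "hform 0 fone" by (simp add: hform_def fone_def)

lemma hform_fpow: "hform (n*k) (fpow n c k)"
  by (cases k) (simp_all add: hform_fone, metis hform_fmul mult_Suc_right)

lemma pencil_gsum: "pencil n c q v = gsum (\<lambda>x. [:x:]) n c [:fst q, fst v:] [:fst (snd q), fst (snd v):] [:snd (snd q), snd (snd v):]"
  unfolding pencil_def gsum_def by (rule sum.cong) (auto simp: cf_def mon_def mult.assoc)

lemma bipencil_gsum: "bipencil n c p r w = gsum (\<lambda>x. [:[:x:]:]) n c
     [: [:fst p:], [:fst r, fst w:] :] [: [:fst (snd p):], [:fst (snd r), fst (snd w):] :]
     [: [:snd (snd p):], [:snd (snd r), snd (snd w):] :]"
  unfolding bipencil_def gsum_def by (rule sum.cong) (auto simp: cf_def mon_def mult.assoc)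

lemma poly_gsum: "poly (gsum emb n c X Y Z) s = gsum (\<lambda>x. poly (emb x) s) n c (poly X s) (poly Y s) (poly Z s)"
  by (simp add: gsum_def poly_sum mon_def)

definition Fe :: "nat \<Rightarrow> (nat \<Rightarrow> nat \<Rightarrow> nat \<Rightarrow> complex) \<Rightarrow> cpt \<Rightarrow> complex" where
  "Fe n c x = gsum (\<lambda>x. x) n c (fst x) (fst (snd x)) (snd (snd x))"



lemma poly_pencil: "poly (pencil n c q v) s = Fe n c (vadd q (smul s v))"
  unfolding pencil_gsum poly_gsum Fe_def vadd_def smul_def by (simp add: split_def)
lemma poly_bipencil: "poly (poly (bipencil n c p r w) [:u:]) t =
   Fe n c (vadd p (smul u (vadd r (smul t w))))"
  unfolding bipencil_gsum poly_gsum Fe_def vadd_def smul_def by (simp add: split_def algebra_simps)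
lemma monom_dvd_power: "monom 1 a dvd p \<Longrightarrow> monom 1 (a*k) dvd (p ^ k)"
proof -
  assume "monom 1 a dvd p"
  then have "monom 1 a ^ k dvd p ^ k" by (rule dvd_power_same)
  then show ?thesis by (simp add: monom_power)
qed
lemma monom_dvd_le: "a \<le> b \<Longrightarrow> monom (1::'a::comm_ring_1) a dvd monom 1 b"
proof -
  assume "a \<le> b"
  then have "monom (1::'a) b = monom 1 a * monom 1 (b - a)" by (simp add: mult_monom)
  then show ?thesis by simp
qed

lemma mpg_mono: "mult_plane_ge n c q m \<Longrightarrow> k \<le> m \<Longrightarrow> mult_plane_ge n c q k"
  unfolding mult_plane_ge_def by (meson dvd_trans monom_dvd_le)

lemma pencil_fmul: "pencil (n1+n2) (fmul n1 c1 n2 c2) q v = pencil n1 c1 q v * pencil n2 c2 q v"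
  by (simp add: pencil_gsum gsum_fmul' ehom_C)

lemma bipencil_fmul: "bipencil (n1+n2) (fmul n1 c1 n2 c2) p r w = bipencil n1 c1 p r w * bipencil n2 c2 p r w"
  by (simp add: bipencil_gsum gsum_fmul' ehom_CC)

lemma pencil_fpow: "pencil (n*k) (fpow n c k) q v = pencil n c q v ^ k"
  by (simp add: pencil_gsum gsum_fpow ehom_C)

lemma bipencil_fpow: "bipencil (n*k) (fpow n c k) p r w = bipencil n c p r w ^ k"
  by (simp add: bipencil_gsum gsum_fpow ehom_CC)

lemma Fe_fmul: "Fe (n1+n2) (fmul n1 c1 n2 c2) x = Fe n1 c1 x * Fe n2 c2 x"
  by (simp add: Fe_def gsum_fmul' ehom_id)

lemma monom_dvd_mult: "monom 1 a dvd p \<Longrightarrow> monom 1 b dvd q \<Longrightarrow> monom 1 (a+b) dvd (p * q)"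
  by (metis mult_dvd_mono mult_monom mult_1)


lemma mpg_fmul: "mult_plane_ge n1 c1 q m1 \<Longrightarrow> mult_plane_ge n2 c2 q m2 \<Longrightarrow>
   mult_plane_ge (n1+n2) (fmul n1 c1 n2 c2) q (m1+m2)"
  by (simp add: mult_plane_ge_def pencil_fmul monom_dvd_mult)

lemma mpg_fpow: "mult_plane_ge n c q m \<Longrightarrow> mult_plane_ge (n*k) (fpow n c k) q (m*k)"
  by (simp add: mult_plane_ge_def pencil_fpow monom_dvd_power)

definition dot :: "cpt \<Rightarrow> cpt \<Rightarrow> complex" where
  "dot l x = fst l * fst x + fst (snd l) * fst (snd x) + snd (snd l) * snd (snd x)"

definition lin :: "cpt \<Rightarrow> nat \<Rightarrow> nat \<Rightarrow> nat \<Rightarrow> complex" where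
  "lin l a b e = (if (a,b,e) = (1,0,0) then fst l else if (a,b,e) = (0,1,0) then fst (snd l)
      else if (a,b,e) = (0,0,1) then snd (snd l) else 0)"

lemma hmonos1: "hmonos 1 = {(1,0,0),(0,1,0),(0,0,1)}"
  by (auto simp: hmonos_def)

lemma gsum_lin: "gsum emb 1 (lin l) X Y Z = emb (fst l) * X + emb (fst (snd l)) * Y + emb (snd (snd l)) * Z"
  unfolding gsum_def hmonos1 by (simp add: cf_def lin_def mon_def)

lemma hform_lin: "hform 1 (lin l)"
  by (auto simp: hform_def lin_def)

lemma Fe_lin: "Fe 1 (lin l) x = dot l x"
  unfolding Fe_def gsum_lin by (simp add: dot_def)

lemma pencil_lin: "pencil 1 (lin l) q v = [:dot l q, dot l v:]"
  unfolding pencil_gsum gsum_lin by (simp add: dot_def algebra_simps)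

lemma bipencil_lin: "bipencil 1 (lin l) p r w = [: [:dot l p:], [:dot l r, dot l w:] :]"
  unfolding bipencil_gsum gsum_lin by (simp add: dot_def algebra_simps)

definition curv :: "nat \<Rightarrow> (nat \<Rightarrow> nat \<Rightarrow> nat \<Rightarrow> complex) \<Rightarrow> complex poly" where
  "curv n c = gsum (\<lambda>x. [:x:]) n c 1 [:0,1:] [:0,0,1:]"

lemma curv_fmul: "curv (n1+n2) (fmul n1 c1 n2 c2) = curv n1 c1 * curv n2 c2"
  by (simp add: curv_def gsum_fmul' ehom_C)

lemma curv_fpow: "curv (n*k) (fpow n c k) = curv n c ^ k"
  by (simp add: curv_def gsum_fpow ehom_C)

lemma curv_lin: "curv 1 (lin l) = [:fst l, fst (snd l), snd (snd l):]"
  unfolding curv_def gsum_lin by simp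

lemma curv_lin_nz: "l \<noteq> (0,0,0) \<Longrightarrow> curv 1 (lin l) \<noteq> 0"
  unfolding curv_lin by (cases l) auto

lemma curv_nz_imp: "curv n c \<noteq> 0 \<Longrightarrow> c \<noteq> (\<lambda>_ _ _. 0)"
  by (auto simp: curv_def gsum_def cf_def)

lemma pCons0_dvd: "monom 1 1 dvd pCons 0 p"
proof (rule dvdI[of _ _ p])
  show "pCons 0 p = monom 1 1 * p" by (simp add: monom_Suc monom_0)
qed

lemma pCons0_dvd': "monom 1 (Suc 0) dvd pCons 0 p"
  using pCons0_dvd by simp

lemma mpg0: "mult_plane_ge n c q 0"
  by (simp add: mult_plane_ge_def)

lemma mpg_lin: "dot l q = 0 \<Longrightarrow> mult_plane_ge 1 (lin l) q 1"
  unfolding mult_plane_ge_def pencil_lin by (simp add: pCons0_dvd')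

definition mpb :: "nat \<Rightarrow> (nat \<Rightarrow> nat \<Rightarrow> nat \<Rightarrow> complex) \<Rightarrow> cpt \<Rightarrow> nat \<Rightarrow> bool" where
  "mpb n c p k \<longleftrightarrow> (\<forall>r w. monom 1 k dvd bipencil n c p r w)"

lemma mpb0: "mpb n c p 0" by (simp add: mpb_def)

lemma mpb_lin: "dot l p = 0 \<Longrightarrow> mpb 1 (lin l) p 1"
  unfolding mpb_def bipencil_lin by (simp add: pCons0_dvd')

lemma mpb_fmul: "mpb n1 c1 p m1 \<Longrightarrow> mpb n2 c2 p m2 \<Longrightarrow> mpb (n1+n2) (fmul n1 c1 n2 c2) p (m1+m2)"
  by (simp add: mpb_def bipencil_fmul monom_dvd_mult)

lemma mpb_fpow: "mpb n c p m \<Longrightarrow> mpb (n*k) (fpow n c k) p (m*k)"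
  by (simp add: mpb_def bipencil_fpow monom_dvd_power)

definition cross :: "cpt \<Rightarrow> cpt \<Rightarrow> cpt" where
  "cross a b = (fst (snd a) * snd (snd b) - snd (snd a) * fst (snd b),
                snd (snd a) * fst b - fst a * snd (snd b),
                fst a * fst (snd b) - fst (snd a) * fst b)"

lemma dot_cross: "dot (cross a b) x = det3 x a b"
  by (simp add: dot_def cross_def det3_def split_def algebra_simps)

lemma cross_nz: "det3 x a b \<noteq> 0 \<Longrightarrow> cross a b \<noteq> (0,0,0)"
  by (metis dot_cross dot_def fst_conv snd_conv mult_zero_left add_0)

lemma mpg_fmul': "mult_plane_ge n1 c1 q m1 \<Longrightarrow> mult_plane_ge n2 c2 q m2 \<Longrightarrow> n = n1 + n2 \<Longrightarrow> k = m1 + m2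
   \<Longrightarrow> mult_plane_ge n (fmul n1 c1 n2 c2) q k"
  using mpg_fmul by simp

lemma mpb_fmul': "mpb n1 c1 q m1 \<Longrightarrow> mpb n2 c2 q m2 \<Longrightarrow> n = n1 + n2 \<Longrightarrow> k = m1 + m2
   \<Longrightarrow> mpb n (fmul n1 c1 n2 c2) q k"
  using mpb_fmul by simp

lemma exist_h:
  assumes "finite Z"
  shows "\<exists>Nh h. hform (3*Nh) h \<and> curv (3*Nh) h \<noteq> 0 \<and> (\<forall>q. Pl q \<in> Z \<longrightarrow> mult_plane_ge (3*Nh) h q 1)"
  using assms
proof (induction Z rule: finite_induct)
  case empty
  show ?case
    by (rule exI[of _ 0], rule exI[of _ fone]) (simp add: hform_fone curv_def gsum_fone ehom_C)
next
  case (insert Q Z)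
  then obtain Nh h where h: "hform (3*Nh) h" "curv (3*Nh) h \<noteq> 0"
    "\<forall>q. Pl q \<in> Z \<longrightarrow> mult_plane_ge (3*Nh) h q 1" by blast
  show ?case
  proof (cases Q)
    case (Pl q)
    define lq where "lq = (if fst q = 0 \<and> fst (snd q) = 0 then (1,0,0) else (fst (snd q), - fst q, 0::complex))"
    have lq0: "dot lq q = 0" by (auto simp: lq_def dot_def)
    have lqn: "lq \<noteq> (0,0,0)" by (auto simp: lq_def)
    define h' where "h' = fmul 3 (fpow 1 (lin lq) 3) (3*Nh) h"
    have e: "3 * Suc Nh = 3 + 3*Nh" by simp
    have "hform (3 + 3*Nh) h'" unfolding h'_def by (rule hform_fmul)
    moreover have "curv (3 + 3*Nh) h' \<noteq> 0"
      unfolding h'_def curv_fmul using curv_fpow[of 1 3 "lin lq"] curv_lin_nz[OF lqn] h(2) by simp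
    moreover have "mult_plane_ge (3 + 3*Nh) h' q' 1" if "Pl q' \<in> insert Q Z" for q'
    proof (cases "q' = q")
      case True
      have "mult_plane_ge (1*3) (fpow 1 (lin lq) 3) q (1*3)" by (rule mpg_fpow[OF mpg_lin[OF lq0]])
      then have "mult_plane_ge (3 + 3*Nh) h' q (3 + 0)" unfolding h'_def
        by (intro mpg_fmul mpg0) simp
      then have "mult_plane_ge (3 + 3*Nh) h' q 1" by (rule mpg_mono) simp
      with True show ?thesis by simp
    next
      case False
      then have "Pl q' \<in> Z" using that Pl by auto
      then have "mult_plane_ge (3*Nh) h q' 1" using h(3) by blast
      then show ?thesis unfolding h'_def by (rule mpg_fmul'[OF mpg0]) simp_all
    qed
    ultimately show ?thesis by (intro exI[of _ "Suc Nh"] exI[of _ h']) (simp only: e, blast)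
  next
    case (Ex i r)
    then show ?thesis using h by (intro exI[of _ Nh] exI[of _ h]) auto
  qed
qed

lemma coeff_of_monom_dvd: "monom 1 k dvd G \<Longrightarrow> j < k \<Longrightarrow> coeff G j = 0"
  by (auto elim!: dvdE simp: coeff_monom_mult)

definition LL :: "(nat \<Rightarrow> cpt) \<Rightarrow> nat \<Rightarrow> nat \<Rightarrow> nat \<Rightarrow> nat \<Rightarrow> nat \<Rightarrow> complex" where
  "LL P a b = lin (cross (P a) (P b))"

definition TT :: "(nat \<Rightarrow> cpt) \<Rightarrow> nat \<Rightarrow> nat \<Rightarrow> nat \<Rightarrow> complex" where
  "TT P = fmul 2 (fmul 1 (LL P 1 2) 1 (LL P 1 3)) 1 (LL P 2 3)"

lemma det3_rep: "det3 a a b = 0" "det3 a b a = 0"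
  by (simp_all add: det3_def split_def algebra_simps)

lemma det3_perm: "det3 a b c = det3 b c a" "det3 a b c = - det3 b a c"
  by (simp_all add: det3_def split_def algebra_simps)

lemma mpg_LL: "mult_plane_ge 1 (LL P a b) (P i) (if i = a \<or> i = b then 1 else 0)"
proof (cases "i = a \<or> i = b")
  case True
  have "dot (cross (P a) (P b)) (P i) = 0" using True by (auto simp: dot_cross det3_rep)
  from mpg_lin[OF this] show ?thesis by (simp only: True if_True LL_def)
next
  case False
  then show ?thesis by (simp only: False if_False mpg0)
qed

lemma mpb_LL: "mpb 1 (LL P a b) (P i) (if i = a \<or> i = b then 1 else 0)"
proof (cases "i = a \<or> i = b")
  case True
  have "dot (cross (P a) (P b)) (P i) = 0" using True by (auto simp: dot_cross det3_rep)
  from mpb_lin[OF this] show ?thesis by (simp only: True if_True LL_def)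
next
  case False
  then show ?thesis by (simp only: False if_False mpb0)
qed

lemma hform_TT: "hform 3 (TT P)"
  unfolding TT_def using hform_fmul[of 2 1 "fmul 1 (LL P 1 2) 1 (LL P 1 3)" "LL P 2 3"] by simp

lemma mpg_TT: "i \<in> {1,2,3} \<Longrightarrow> mult_plane_ge 3 (TT P) (P i) 2"
proof -
  assume i: "i \<in> {1,2,3}"
  let ?x = "(if i = 1 \<or> i = 2 then 1 else 0) + (if i = 1 \<or> i = 3 then 1 else 0)"
  have "mult_plane_ge 2 (fmul 1 (LL P 1 2) 1 (LL P 1 3)) (P i) ?x"
    by (rule mpg_fmul'[OF mpg_LL mpg_LL]) simp_all
  then show ?thesis unfolding TT_def
    by (rule mpg_fmul'[OF _ mpg_LL]) (use i in auto)
qed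

lemma mpb_TT: "i \<in> {1,2,3} \<Longrightarrow> mpb 3 (TT P) (P i) 2"
proof -
  assume i: "i \<in> {1,2,3}"
  let ?x = "(if i = 1 \<or> i = 2 then 1 else 0) + (if i = 1 \<or> i = 3 then 1 else 0)"
  have "mpb 2 (fmul 1 (LL P 1 2) 1 (LL P 1 3)) (P i) ?x"
    by (rule mpb_fmul'[OF mpb_LL mpb_LL]) simp_all
  then show ?thesis unfolding TT_def
    by (rule mpb_fmul'[OF _ mpb_LL]) (use i in auto)
qed

lemma curv_fmul': "n = n1 + n2 \<Longrightarrow> curv n (fmul n1 c1 n2 c2) = curv n1 c1 * curv n2 c2"
  using curv_fmul by simp

lemma curv_TT:
  assumes det: "det3 (P 1) (P 2) (P 3) \<noteq> 0"
  shows "curv 3 (TT P) \<noteq> 0"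
proof -
  have n12: "cross (P 1) (P 2) \<noteq> (0,0,0)"
    by (rule cross_nz[of "P 3"]) (metis det det3_perm(1))
  have n13: "cross (P 1) (P 3) \<noteq> (0,0,0)"
    by (rule cross_nz[of "P 2"]) (metis det det3_perm neg_equal_0_iff_equal)
  have n23: "cross (P 2) (P 3) \<noteq> (0,0,0)"
    by (rule cross_nz[of "P 1"]) (use det in auto)
  have "curv 3 (TT P) = curv 2 (fmul 1 (LL P 1 2) 1 (LL P 1 3)) * curv 1 (LL P 2 3)"
    unfolding TT_def by (rule curv_fmul') simp
  also have "\<dots> = curv 1 (LL P 1 2) * curv 1 (LL P 1 3) * curv 1 (LL P 2 3)"
    by (subst curv_fmul') simp_all
  finally show ?thesis using curv_lin_nz[OF n12] curv_lin_nz[OF n13] curv_lin_nz[OF n23]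
    by (simp add: LL_def)
qed

lemma exist_sys:
  assumes det: "det3 (P 1) (P 2) (P 3) \<noteq> 0" and fin: "finite Z" and S3: "\<forall>Q\<in>Z. in_S3 P Q"
  shows "\<exists>d c. in_linsys P d c \<and> (\<forall>Q\<in>Z. mult_ge P d c m Q)"
proof -
  obtain Nh h where h: "hform (3*Nh) h" "curv (3*Nh) h \<noteq> 0"
    "\<forall>q. Pl q \<in> Z \<longrightarrow> mult_plane_ge (3*Nh) h q 1" using exist_h[OF fin] by blast
  define a where "a = Nh*m + m"
  define d where "d = a + Nh*m"
  define G where "G = fmul (3*a) (fpow 3 (TT P) a) (3*Nh*m) (fpow (3*Nh) h m)"
  have dd: "3*d = 3*a + 3*Nh*m" by (simp add: d_def)
  have hG: "hform (3*d) G" unfolding dd G_def by (rule hform_fmul)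
  have "curv (3*d) G = curv 3 (TT P) ^ a * curv (3*Nh) h ^ m"
    unfolding dd G_def curv_fmul curv_fpow ..
  then have cG: "curv (3*d) G \<noteq> 0" using curv_TT[OF det] h(2) by simp
  have mP: "mult_plane_ge (3*d) G (P i) d" if i: "i \<in> {1,2,3}" for i
  proof -
    have "mult_plane_ge (3*a + 3*Nh*m) G (P i) (2*a + 0)"
      unfolding G_def using mpg_fpow[OF mpg_TT[OF i, of P], of a]
      by (intro mpg_fmul mpg0) (simp add: mult.commute)
    then show ?thesis unfolding dd by (rule mpg_mono) (simp add: a_def d_def)
  qed
  have mZ: "mult_ge P d G m Q" if Q: "Q \<in> Z" for Q
  proof (cases Q)
    case (Pl q)
    have "mult_plane_ge (3*Nh) h q 1" using h(3) Q Pl by blast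
    then have "mult_plane_ge (3*a + 3*Nh*m) G q (0 + 1*m)"
      unfolding G_def by (intro mpg_fmul mpg0 mpg_fpow)
    then show ?thesis using Pl dd by (simp add: mult_ge_def)
  next
    case (Ex i r)
    have "in_S3 P (Ex i r)" using S3 Q Ex by blast
    then have i: "i \<in> {1,2,3}" unfolding in_S3_def by simp
    have "mpb (3*a + 3*Nh*m) G (P i) (2*a + 0)"
      unfolding G_def using mpb_fpow[OF mpb_TT[OF i, of P], of a]
      by (intro mpb_fmul mpb0) (simp add: mult.commute)
    then have dv: "monom 1 (2*a) dvd bipencil (3*d) G (P i) r (chartw P i r)"
      unfolding dd mpb_def by (metis add_0_right)
    show ?thesis unfolding Ex mult_ge_def Let_def s3pt.case
    proof (intro allI impI)
      fix j l assume "j + l < m"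
      then have "j + d < 2*a" by (simp add: a_def d_def)
      then show "coeff (coeff (bipencil (3 * d) G (P i) r (chartw P i r)) (j + d)) l = 0"
        using coeff_of_monom_dvd[OF dv] by simp
    qed
  qed
  have "in_linsys P d G" unfolding in_linsys_def using hG curv_nz_imp[OF cG] mP by blast
  then show ?thesis using mZ by blast
qed

lemma degree_pow1: "degree (X::complex poly) \<le> 1 \<Longrightarrow> degree (X ^ k) \<le> k"
proof -
  assume "degree X \<le> 1"
  then have "degree X * k \<le> 1 * k" by (rule mult_le_mono1)
  then have "degree X * k \<le> k" by simp
  then show ?thesis using degree_power_le[of X k] by (rule_tac order_trans) auto
qed

lemma degree_mult3: "degree ((A::complex poly) * B * C) \<le> degree A + degree B + degree C"
proof -
  have "degree (A * B * C) \<le> degree (A * B) + degree C" by (rule degree_mult_le)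
  also have "\<dots> \<le> degree A + degree B + degree C" using degree_mult_le[of A B] by simp
  finally show ?thesis .
qed

lemma degree_gsumC:
  assumes "degree X \<le> 1" "degree Y \<le> 1" "degree Z \<le> 1"
  shows "degree (gsum (\<lambda>x. [:x:]) n c X Y Z) \<le> n"
  unfolding gsum_def
proof (rule degree_sum_le[OF finite_hmonos])
  fix m assume m: "m \<in> hmonos n"
  have "degree ([:cf c m:] * mon X Y Z m) \<le> degree (mon X Y Z m)"
    by (simp add: degree_smult_le)
  also have "\<dots> \<le> fst m + fst (snd m) + snd (snd m)"
  proof -
    have "degree (mon X Y Z m) \<le> degree (X ^ fst m) + degree (Y ^ fst (snd m)) + degree (Z ^ snd (snd m))"
      unfolding mon_def by (rule degree_mult3)
    also have "\<dots> \<le> fst m + fst (snd m) + snd (snd m)"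
      using degree_pow1[OF assms(1), of "fst m"] degree_pow1[OF assms(2), of "fst (snd m)"]
        degree_pow1[OF assms(3), of "snd (snd m)"] by simp
    finally show ?thesis .
  qed
  also have "\<dots> = n" using m by (auto simp: hmonos_def)
  finally show "degree ([:cf c m:] * mon X Y Z m) \<le> n" .
qed

lemma degree_pencil: "degree (pencil n c q v) \<le> n"
  unfolding pencil_gsum by (rule degree_gsumC) auto

lemma Fe_smul: "Fe n c (smul l v) = l ^ n * Fe n c v"
proof -
  have "Fe n c (smul l v) = (\<Sum>m\<in>hmonos n. l ^ n * (cf c m * mon (fst v) (fst (snd v)) (snd (snd v)) m))"
    unfolding Fe_def gsum_def
  proof (rule sum.cong[OF refl])
    fix m assume "m \<in> hmonos n"
    then have "n = fst m + fst (snd m) + snd (snd m)" by (auto simp: hmonos_def)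
    then show "cf c m * mon (fst (smul l v)) (fst (snd (smul l v))) (snd (snd (smul l v))) m =
      l ^ n * (cf c m * mon (fst v) (fst (snd v)) (snd (snd v)) m)"
      by (simp add: smul_def split_def mon_def power_add power_mult_distrib mult_ac)
  qed
  also have "\<dots> = l ^ n * Fe n c v" by (simp add: Fe_def gsum_def sum_distrib_left)
  finally show ?thesis .
qed

lemma pl_case:
  assumes "mult_plane_ge 3 c q 4"
  shows "Fe 3 c x = 0"
proof -
  define v where "v = (fst x - fst q, fst (snd x) - fst (snd q), snd (snd x) - snd (snd q))"
  have "pencil 3 c q v = 0"
  proof (rule ccontr)
    assume nz: "pencil 3 c q v \<noteq> 0"
    have "monom 1 4 dvd pencil 3 c q v" using assms unfolding mult_plane_ge_def by blast
    then have "degree (monom (1::complex) 4) \<le> degree (pencil 3 c q v)"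
      using nz by (rule dvd_imp_degree_le)
    then show False using degree_pencil[of 3 c q v] by (simp add: degree_monom_eq)
  qed
  then have "poly (pencil 3 c q v) 1 = 0" by simp
  moreover have "vadd q (smul 1 v) = x" by (simp add: v_def vadd_def smul_def split_def)
  ultimately show ?thesis by (simp add: poly_pencil)
qed

lemma le3: "(a::nat) \<le> 3 \<Longrightarrow> a = 0 \<or> a = 1 \<or> a = 2 \<or> a = 3" by linarith
lemma hmonos3_mem: "a + b + e = (3::nat) \<Longrightarrow> (a,b,e) \<in> {(3,0,0),(2,1,0),(1,2,0),(0,3,0),(2,0,1),(1,1,1),(0,2,1),(1,0,2),(0,1,2),(0,0,3)}"
proof -
  assume s: "a + b + e = 3"
  have "a \<le> 3" "b \<le> 3" using s by linarith+
  then have A: "a = 0 \<or> a = 1 \<or> a = 2 \<or> a = 3" and B: "b = 0 \<or> b = 1 \<or> b = 2 \<or> b = 3" using le3 by blast+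
  have E: "e = 3 - a - b" using s by linarith
  from A B show ?thesis unfolding E by (elim disjE) (use s in simp_all)
qed
lemma hmonos3: "hmonos 3 = {(3,0,0),(2,1,0),(1,2,0),(0,3,0),(2,0,1),(1,1,1),(0,2,1),(1,0,2),(0,1,2),(0,0,3)}"
proof
  show "hmonos 3 \<subseteq> {(3,0,0),(2,1,0),(1,2,0),(0,3,0),(2,0,1),(1,1,1),(0,2,1),(1,0,2),(0,1,2),(0,0,3)}"
  proof
    fix x assume x: "x \<in> hmonos 3"
    obtain a b e where xe: "x = (a,b,e)" by (cases x)
    have "a + b + e = 3" using x xe by (simp add: hmonos_def)
    then show "x \<in> {(3,0,0),(2,1,0),(1,2,0),(0,3,0),(2,0,1),(1,1,1),(0,2,1),(1,0,2),(0,1,2),(0,0,3)}"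
      unfolding xe by (rule hmonos3_mem)
  qed
  show "{(3,0,0),(2,1,0),(1,2,0),(0,3,0),(2,0,1),(1,1,1),(0,2,1),(1,0,2),(0,1,2),(0,0,3)} \<subseteq> hmonos 3"
    unfolding hmonos_def insert_subset mem_Collect_eq case_prod_conv by simp
qed


lemma Fe3: "Fe 3 c (1, y, z) =
   (c 3 0 0 + c 2 1 0 * y + c 1 2 0 * y^2 + c 0 3 0 * y^3) +
   (c 2 0 1 + c 1 1 1 * y + c 0 2 1 * y^2) * z + (c 1 0 2 + c 0 1 2 * y) * z^2 + c 0 0 3 * z^3"
  unfolding Fe_def gsum_def hmonos3 by (simp add: cf_def mon_def algebra_simps)

lemma cubic_zero:
  fixes a0 a1 a2 a3 :: complex
  assumes "\<And>z. a0 + a1 * z + a2 * z^2 + a3 * z^3 = 0"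
  shows "a0 = 0 \<and> a1 = 0 \<and> a2 = 0 \<and> a3 = 0"
proof -
  have "\<forall>z. poly [:a0, a1, a2, a3:] z = 0"
    using assms by (simp add: algebra_simps power2_eq_square power3_eq_cube)
  then have "[:a0, a1, a2, a3:] = 0" by (simp only: poly_all_0_iff_0)
  then show ?thesis by simp
qed

lemma ident3:
  assumes h: "hform 3 c" and z: "\<And>x. Fe 3 c x = 0"
  shows "c = (\<lambda>_ _ _. 0)"
proof -
  have A: "\<And>y. (c 3 0 0 + c 2 1 0 * y + c 1 2 0 * y^2 + c 0 3 0 * y^3) = 0 \<and>
     (c 2 0 1 + c 1 1 1 * y + c 0 2 1 * y^2) = 0 \<and> (c 1 0 2 + c 0 1 2 * y) = 0 \<and> c 0 0 3 = 0"
    by (rule cubic_zero) (use z[of "(1, _, _)"] Fe3 in simp)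
  have 1: "c 3 0 0 = 0 \<and> c 2 1 0 = 0 \<and> c 1 2 0 = 0 \<and> c 0 3 0 = 0"
    by (rule cubic_zero) (use A in blast)
  have 2: "c 2 0 1 = 0 \<and> c 1 1 1 = 0 \<and> c 0 2 1 = 0"
    using cubic_zero[of "c 2 0 1" "c 1 1 1" "c 0 2 1" 0] A by simp
  have 3: "c 1 0 2 = 0 \<and> c 0 1 2 = 0"
    using cubic_zero[of "c 1 0 2" "c 0 1 2" 0 0] A by simp
  have 4: "c 0 0 3 = 0" using A by blast
  show ?thesis
  proof (intro ext)
    fix a b e
    show "c a b e = 0"
    proof (cases "a + b + e = 3")
      case True
      then have "(a,b,e) \<in> hmonos 3" by (simp add: hmonos_def)
      then show ?thesis using 1 2 3 4 unfolding hmonos3 by auto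
    next
      case False
      then show ?thesis using h by (simp add: hform_def)
    qed
  qed
qed

definition lc :: "cpt \<Rightarrow> cpt \<Rightarrow> cpt \<Rightarrow> complex \<Rightarrow> complex \<Rightarrow> complex \<Rightarrow> cpt" where
  "lc p q r x y z = vadd (smul x p) (vadd (smul y q) (smul z r))"

lemma cramer_id:
  fixes p q r v :: cpt
  shows "det3 p q r * fst v = det3 v q r * fst p + det3 p v r * fst q + det3 p q v * fst r"
    "det3 p q r * fst (snd v) = det3 v q r * fst (snd p) + det3 p v r * fst (snd q) + det3 p q v * fst (snd r)"
    "det3 p q r * snd (snd v) = det3 v q r * snd (snd p) + det3 p v r * snd (snd q) + det3 p q v * snd (snd r)"
  by (cases p; cases q; cases r; cases v; simp add: det3_def algebra_simps)+

lemma cr1: "(D::complex) \<noteq> 0 \<Longrightarrow> D * v = A * p + B * q + C * r \<Longrightarrow> v = A / D * p + B / D * q + C / D * r"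
  by (simp add: field_simps)

lemma cramer:
  assumes D: "det3 p q r \<noteq> 0"
  shows "\<exists>x y z. v = lc p q r x y z"
proof -
  let ?D = "det3 p q r"
  let ?x = "det3 v q r / ?D" and ?y = "det3 p v r / ?D" and ?z = "det3 p q v / ?D"
  have e1: "fst v = ?x * fst p + ?y * fst q + ?z * fst r" by (rule cr1[OF D cramer_id(1)])
  have e2: "fst (snd v) = ?x * fst (snd p) + ?y * fst (snd q) + ?z * fst (snd r)" by (rule cr1[OF D cramer_id(2)])
  have e3: "snd (snd v) = ?x * snd (snd p) + ?y * snd (snd q) + ?z * snd (snd r)" by (rule cr1[OF D cramer_id(3)])
  have "v = lc p q r ?x ?y ?z"
    unfolding lc_def vadd_def smul_def split_def by (rule prod_eqI, simp add: e1 add.assoc, rule prod_eqI, simp_all add: e2 e3 add.assoc)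
  then show ?thesis by blast
qed

definition bd :: "nat \<Rightarrow> complex poly poly \<Rightarrow> bool" where
  "bd N G \<longleftrightarrow> degree G \<le> N \<and> (\<forall>k. degree (coeff G k) \<le> k)"

lemma bd_mult:
  assumes "bd N1 G" "bd N2 H"
  shows "bd (N1 + N2) (G * H)"
proof -
  have "degree (G * H) \<le> N1 + N2"
    using degree_mult_le[of G H] assms by (auto simp: bd_def)
  moreover have "degree (coeff (G * H) k) \<le> k" for k
    unfolding coeff_mult
  proof (rule degree_sum_le)
    fix i assume "i \<in> {..k}"
    then have "i \<le> k" by simp
    have "degree (coeff G i * coeff H (k - i)) \<le> degree (coeff G i) + degree (coeff H (k - i))"
      by (rule degree_mult_le)
    also have "\<dots> \<le> i + (k - i)" using assms by (intro add_mono) (auto simp: bd_def)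
    also have "\<dots> = k" using \<open>i \<le> k\<close> by simp
    finally show "degree (coeff G i * coeff H (k - i)) \<le> k" .
  qed simp
  ultimately show ?thesis by (simp add: bd_def)
qed

lemma bd_sum:
  assumes "finite A" "\<And>a. a \<in> A \<Longrightarrow> bd N (f a)"
  shows "bd N (sum f A)"
proof -
  have "degree (sum f A) \<le> N" using assms by (intro degree_sum_le) (auto simp: bd_def)
  moreover have "degree (coeff (sum f A) k) \<le> k" for k
    unfolding coeff_sum using assms by (intro degree_sum_le) (auto simp: bd_def)
  ultimately show ?thesis by (simp add: bd_def)
qed

lemma bd_const: "bd 0 [:[:c:]:]"
  by (auto simp: bd_def coeff_pCons split: nat.split)

lemma bd_one: "bd 0 1"
  by (auto simp: bd_def coeff_1)

lemma bd_X: "bd 1 [: [:a:], [:b, e:] :]"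
proof -
  have "degree (coeff [: [:a:], [:b, e:] :] k) \<le> k" for k
    by (cases k) (auto simp: coeff_pCons split: nat.split)
  moreover have "degree [: [:a:], [:b, e:] :] \<le> 1" by (simp add: degree_pCons_le)
  ultimately show ?thesis by (simp add: bd_def)
qed

lemma bd_pow: "bd N X \<Longrightarrow> bd (N * k) (X ^ k)"
proof (induction k)
  case 0 then show ?case by (simp add: bd_one)
next
  case (Suc k)
  have "bd (N + N * k) (X * X ^ k)" by (rule bd_mult[OF Suc.prems Suc.IH[OF Suc.prems]])
  then show ?case by simp
qed

lemma bd_mono: "bd N G \<Longrightarrow> N \<le> M \<Longrightarrow> bd M G"
  by (auto simp: bd_def)

lemma bd_bipencil: "bd n (bipencil n c p r w)"
  unfolding bipencil_gsum gsum_def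
proof (rule bd_sum[OF finite_hmonos])
  fix m assume m: "m \<in> hmonos n"
  have "bd (0 + (1 * fst m + 1 * fst (snd m) + 1 * snd (snd m)))
     ([:[:cf c m:]:] * mon [: [:fst p:], [:fst r, fst w:] :] [: [:fst (snd p):], [:fst (snd r), fst (snd w):] :]
        [: [:snd (snd p):], [:snd (snd r), snd (snd w):] :] m)"
    unfolding mon_def by (intro bd_mult bd_const bd_pow bd_X)
  moreover have "0 + (1 * fst m + 1 * fst (snd m) + 1 * snd (snd m)) = n" using m by (auto simp: hmonos_def)
  ultimately show "bd n ([:[:cf c m:]:] * mon [: [:fst p:], [:fst r, fst w:] :] [: [:fst (snd p):], [:fst (snd r), fst (snd w):] :]
        [: [:snd (snd p):], [:snd (snd r), snd (snd w):] :] m)" by simp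
qed

lemma bd_coeff_hi: "bd N G \<Longrightarrow> N < k \<Longrightarrow> coeff G k = 0"
  by (auto simp: bd_def intro: coeff_eq_0)

lemma bd_coeff_hi2: "bd N G \<Longrightarrow> k < l \<Longrightarrow> coeff (coeff G k) l = 0"
  by (auto simp: bd_def intro: coeff_eq_0 order.strict_trans1)

lemma cases5: obtains "k = 0" | "k = 1" | "k = 2" | "k = 3" | j where "k = Suc (Suc (Suc (Suc j)))"
proof -
  consider "k = 0" | "k = 1" | "k = 2" | "k = 3" | "k \<ge> (4::nat)" by linarith
  then show ?thesis
  proof cases
    case 5 then have "k = Suc (Suc (Suc (Suc (k - 4))))" by arith
    then show ?thesis using that by blast
  qed (use that in auto)
qed

lemma G_shape:
  assumes b: "bd 3 G" and z: "\<And>k l. 1 \<le> k \<Longrightarrow> k + l \<le> 4 \<Longrightarrow> coeff (coeff G k) l = 0"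
  shows "G = [: [:coeff (coeff G 0) 0:], 0, 0, [:0, 0, coeff (coeff G 3) 2, coeff (coeff G 3) 3:] :]"
proof (rule poly_eqI)
  fix k
  have hi: "\<And>k l. k < l \<Longrightarrow> coeff (coeff G k) l = 0" using bd_coeff_hi2[OF b] .
  consider "k = 0" | "k = 1" | "k = 2" | "k = 3" | j where "k = Suc (Suc (Suc (Suc j)))"
    by (rule cases5)
  then show "coeff G k = coeff [: [:coeff (coeff G 0) 0:], 0, 0, [:0, 0, coeff (coeff G 3) 2, coeff (coeff G 3) 3:] :] k"
  proof cases
    case 1
    show ?thesis unfolding 1
    proof (rule poly_eqI)
      fix l show "coeff (coeff G 0) l = coeff (coeff [: [:coeff (coeff G 0) 0:], 0, 0, [:0, 0, coeff (coeff G 3) 2, coeff (coeff G 3) 3:] :] 0) l"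
        using hi[of 0 l] by (cases l) auto
    qed
  next
    case 2
    show ?thesis unfolding 2
    proof (rule poly_eqI)
      fix l show "coeff (coeff G 1) l = coeff (coeff [: [:coeff (coeff G 0) 0:], 0, 0, [:0, 0, coeff (coeff G 3) 2, coeff (coeff G 3) 3:] :] 1) l"
        using hi[of 1 l] z[of 1 l] by (cases "l \<le> 3") auto
    qed
  next
    case 3
    show ?thesis unfolding 3
    proof (rule poly_eqI)
      fix l show "coeff (coeff G 2) l = coeff (coeff [: [:coeff (coeff G 0) 0:], 0, 0, [:0, 0, coeff (coeff G 3) 2, coeff (coeff G 3) 3:] :] 2) l"
        using hi[of 2 l] z[of 2 l] by (cases "l \<le> 2") (auto simp: numeral_2_eq_2)
    qed
  next
    case 4
    show ?thesis unfolding 4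
    proof (rule poly_eqI)
      fix l
      consider "l = 0" | "l = 1" | "l = 2" | "l = 3" | i where "l = Suc (Suc (Suc (Suc i)))"
        by (rule cases5)
      then show "coeff (coeff G 3) l = coeff (coeff [: [:coeff (coeff G 0) 0:], 0, 0, [:0, 0, coeff (coeff G 3) 2, coeff (coeff G 3) 3:] :] 3) l"
      proof cases
        case 1 then show ?thesis using z[of 3 0] by (simp add: numeral_3_eq_3)
      next
        case 2 then show ?thesis using z[of 3 1] by (simp add: numeral_3_eq_3)
      next
        case 3 then show ?thesis by (simp add: numeral_3_eq_3 numeral_2_eq_2)
      next
        case 4 then show ?thesis by (simp add: numeral_3_eq_3)
      next
        case 5 then show ?thesis using hi[of 3 l] by (simp add: numeral_3_eq_3)
      qed
    qed
  next
    case 5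
    then show ?thesis using bd_coeff_hi[OF b, of k] by simp
  qed
qed

lemma poly_ext0:
  fixes A B :: "complex poly"
  assumes "\<And>s. s \<noteq> 0 \<Longrightarrow> poly A s = poly B s"
  shows "poly A 0 = poly B 0"
proof (cases "A - B = 0")
  case True then show ?thesis by simp
next
  case False
  have "UNIV - {0} \<subseteq> {s. poly (A - B) s = 0}" using assms by auto
  moreover have "finite {s. poly (A - B) s = 0}" by (rule poly_roots_finite[OF False])
  ultimately have "finite (UNIV - {0::complex})" by (rule finite_subset)
  then have "finite (UNIV :: complex set)" by simp
  then show ?thesis using infinite_UNIV_char_0 by blast
qed

lemma vid1: "(y::complex) \<noteq> 0 \<Longrightarrow> lc p r w 1 y z = vadd p (smul y (vadd r (smul (z/y) w)))"
  unfolding lc_def vadd_def smul_def by (simp add: split_def algebra_simps)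

lemma vid2: "vadd (lc p r w 1 0 z) (smul s r) = lc p r w 1 s z"
  unfolding lc_def vadd_def smul_def by (simp add: split_def algebra_simps)

lemma vid3: "(x::complex) \<noteq> 0 \<Longrightarrow> lc p r w x y z = smul x (lc p r w 1 (y/x) (z/x))"
  unfolding lc_def vadd_def smul_def by (simp add: split_def algebra_simps)

lemma vid4: "vadd (lc p r w 0 y z) (smul s p) = lc p r w s y z"
  unfolding lc_def vadd_def smul_def by (simp add: split_def algebra_simps)

lemma vid5: "vadd p (smul 0 v) = p"
  unfolding vadd_def smul_def by (simp add: split_def)

lemma ex_main:
  assumes Fp: "Fe 3 c p = 0"
    and cond: "\<forall>j l. j + l < 4 \<longrightarrow> coeff (coeff (bipencil 3 c p r w) (j+1)) l = 0"
  shows "\<exists>g32 g33. \<forall>x y z. Fe 3 c (lc p r w x y z) = g32 * y * z^2 + g33 * z^3"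
proof -
  define G where "G = bipencil 3 c p r w"
  have b: "bd 3 G" unfolding G_def by (rule bd_bipencil)
  have z: "coeff (coeff G k) l = 0" if "1 \<le> k" "k + l \<le> 4" for k l
  proof -
    have "(k - 1) + l < 4" using that by arith
    then have "coeff (coeff G ((k - 1) + 1)) l = 0" using cond unfolding G_def by blast
    then show ?thesis using that by simp
  qed
  define g00 where "g00 = coeff (coeff G 0) 0"
  define g32 where "g32 = coeff (coeff G 3) 2"
  define g33 where "g33 = coeff (coeff G 3) 3"
  have sh: "G = [: [:g00:], 0, 0, [:0, 0, g32, g33:] :]"
    unfolding g00_def g32_def g33_def by (rule G_shape[OF b z])
  have ev: "Fe 3 c (vadd p (smul u (vadd r (smul t w)))) = g00 + u^3 * (g32 * t^2 + g33 * t^3)" for u t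
  proof -
    have "Fe 3 c (vadd p (smul u (vadd r (smul t w)))) = poly (poly G [:u:]) t"
      unfolding G_def by (rule poly_bipencil[symmetric])
    also have "\<dots> = g00 + u^3 * (g32 * t^2 + g33 * t^3)"
      unfolding sh by (simp add: algebra_simps power2_eq_square power3_eq_cube)
    finally show ?thesis .
  qed
  have "g00 = 0" using ev[of 0 0] Fp by (simp add: vid5)
  then have ev0: "Fe 3 c (vadd p (smul u (vadd r (smul t w)))) = u^3 * (g32 * t^2 + g33 * t^3)" for u t
    using ev by simp
  have S1: "Fe 3 c (lc p r w 1 y z) = g32 * y * z^2 + g33 * z^3" for y z
  proof (cases "y = 0")
    case False
    have "Fe 3 c (lc p r w 1 y z) = y^3 * (g32 * (z/y)^2 + g33 * (z/y)^3)"
      unfolding vid1[OF False] ev0 ..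
    also have "\<dots> = g32 * y * z^2 + g33 * z^3" using False
      by (simp add: field_simps power2_eq_square power3_eq_cube)
    finally show ?thesis .
  next
    case True
    have nz: "Fe 3 c (lc p r w 1 s z) = g32 * s * z^2 + g33 * z^3" if "s \<noteq> 0" for s
    proof -
      have "Fe 3 c (lc p r w 1 s z) = s^3 * (g32 * (z/s)^2 + g33 * (z/s)^3)"
        unfolding vid1[OF that] ev0 ..
      also have "\<dots> = g32 * s * z^2 + g33 * z^3" using that
        by (simp add: field_simps power2_eq_square power3_eq_cube)
      finally show ?thesis .
    qed
    have "poly (pencil 3 c (lc p r w 1 0 z) r) 0 = poly [:g33 * z^3, g32 * z^2:] 0"
    proof (rule poly_ext0)
      fix s :: complex assume "s \<noteq> 0"
      then show "poly (pencil 3 c (lc p r w 1 0 z) r) s = poly [:g33 * z^3, g32 * z^2:] s"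
        unfolding poly_pencil vid2 using nz by (simp add: algebra_simps)
    qed
    then show ?thesis unfolding True poly_pencil vid2 by simp
  qed
  have S2: "Fe 3 c (lc p r w x y z) = g32 * y * z^2 + g33 * z^3" for x y z
  proof (cases "x = 0")
    case False
    have "Fe 3 c (lc p r w x y z) = x^3 * (g32 * (y/x) * (z/x)^2 + g33 * (z/x)^3)"
      unfolding vid3[OF False] Fe_smul S1 ..
    also have "\<dots> = g32 * y * z^2 + g33 * z^3" using False
      by (simp add: field_simps power2_eq_square power3_eq_cube)
    finally show ?thesis .
  next
    case True
    have nz: "Fe 3 c (lc p r w s y z) = g32 * y * z^2 + g33 * z^3" if "s \<noteq> 0" for s
    proof -
      have "Fe 3 c (lc p r w s y z) = s^3 * (g32 * (y/s) * (z/s)^2 + g33 * (z/s)^3)"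
        unfolding vid3[OF that] Fe_smul S1 ..
      also have "\<dots> = g32 * y * z^2 + g33 * z^3" using that
        by (simp add: field_simps power2_eq_square power3_eq_cube)
      finally show ?thesis .
    qed
    have "poly (pencil 3 c (lc p r w 0 y z) p) 0 = poly [:g32 * y * z^2 + g33 * z^3:] 0"
    proof (rule poly_ext0)
      fix s :: complex assume "s \<noteq> 0"
      then show "poly (pencil 3 c (lc p r w 0 y z) p) s = poly [:g32 * y * z^2 + g33 * z^3:] s"
        unfolding poly_pencil vid4 using nz by simp
    qed
    then show ?thesis unfolding True poly_pencil vid4 by simp
  qed
  then show ?thesis by blast
qed

lemma pnorm_smul:
  assumes n: "normalized r" and r: "r = smul l q"
  shows "r = pnorm q"
proof -
  obtain q1 q2 q3 where q: "q = (q1,q2,q3)" by (cases q)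
  have r': "r = (l*q1, l*q2, l*q3)" using r q by (simp add: smul_def)
  show ?thesis
  proof (cases "q1 \<noteq> 0")
    case True
    then have "l * q1 = 1" using n r' True by (auto simp: normalized_def)
    then have "l = 1 / q1" using True by (simp add: field_simps)
    then show ?thesis using r' q True by (simp add: pnorm_def field_simps)
  next
    case False
    note f1 = this
    show ?thesis
    proof (cases "q2 \<noteq> 0")
      case True
      then have "l * q2 = 1" using n r' f1 True by (auto simp: normalized_def)
      then have "l = 1 / q2" using True by (simp add: field_simps)
      then show ?thesis using r' q True f1 by (simp add: pnorm_def field_simps)
    next
      case False
      then have "l * q3 = 1" using n r' f1 by (auto simp: normalized_def)
      then show ?thesis using r' q False f1 by (simp add: pnorm_def)
    qed
  qed
qed

lemma normalized_nz: "normalized r \<Longrightarrow> r \<noteq> (0,0,0)"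
  by (auto simp: normalized_def)

lemma lc_001: "lc p r w 0 0 1 = w"
  unfolding lc_def vadd_def smul_def by (simp add: split_def)

lemma ex_cases:
  assumes det: "det3 p q1 q2 \<noteq> 0" and hf: "hform 3 c" and cnz: "c \<noteq> (\<lambda>_ _ _. 0)"
    and Fp: "Fe 3 c p = 0" and Fq1: "Fe 3 c q1 = 0" and Fq2: "Fe 3 c q2 = 0"
    and nr: "normalized r" and rab: "r = vadd (smul a q1) (smul b q2)"
    and w: "w = (if \<exists>l. r = smul l q1 then q2 else q1)"
    and cond: "\<forall>j l. j + l < 4 \<longrightarrow> coeff (coeff (bipencil 3 c p r w) (j+1)) l = 0"
  shows "\<exists>\<alpha>. \<alpha> \<noteq> 0 \<and> ((r = pnorm q1 \<and> (\<forall>x y z. Fe 3 c (lc p q1 q2 x y z) = \<alpha> * y * z^2)) \<or>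
                     (r = pnorm q2 \<and> (\<forall>x y z. Fe 3 c (lc p q1 q2 x y z) = \<alpha> * z * y^2)))"
proof -
  obtain g32 g33 where S: "\<And>x y z. Fe 3 c (lc p r w x y z) = g32 * y * z^2 + g33 * z^3"
    using ex_main[OF Fp cond] by blast
  have Fw: "Fe 3 c w = 0" using w Fq1 Fq2 by simp
  have g33: "g33 = 0" using S[of 0 0 1] Fw by (simp add: lc_001)
  have notall: "\<not> (\<forall>x y z. Fe 3 c (lc p q1 q2 x y z) = 0)"
  proof
    assume "\<forall>x y z. Fe 3 c (lc p q1 q2 x y z) = 0"
    then have "Fe 3 c v = 0" for v using cramer[OF det, of v] by auto
    then have "c = (\<lambda>_ _ _. 0)" by (rule ident3[OF hf])
    then show False using cnz by simp
  qed
  have r0: "r \<noteq> (0,0,0)" by (rule normalized_nz[OF nr])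
  show ?thesis
  proof (cases "\<exists>l. r = smul l q1")
    case True
    then obtain l where l: "r = smul l q1" by blast
    have l0: "l \<noteq> 0" using l r0 by (auto simp: smul_def split_def)
    have wq: "w = q2" using w True by simp
    have "Fe 3 c (lc p q1 q2 x y z) = (g32 / l) * y * z^2" for x y z
    proof -
      have "lc p q1 q2 x y z = lc p r w x (y/l) z"
        unfolding wq l lc_def vadd_def smul_def using l0 by (simp add: split_def field_simps)
      then show ?thesis using S g33 by (simp add: field_simps)
    qed
    moreover have "g32 / l \<noteq> 0" using notall calculation by auto
    ultimately show ?thesis using pnorm_smul[OF nr l] by blast
  next
    case nq1: False
    have wq: "w = q1" using w nq1 by simp
    show ?thesis
    proof (cases "\<exists>l. r = smul l q2")
      case True
      then obtain l where l: "r = smul l q2" by blast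
      have l0: "l \<noteq> 0" using l r0 by (auto simp: smul_def split_def)
      have "Fe 3 c (lc p q1 q2 x y z) = (g32 / l) * z * y^2" for x y z
      proof -
        have "lc p q1 q2 x y z = lc p r w x (z/l) y"
          unfolding wq l lc_def vadd_def smul_def using l0 by (simp add: split_def field_simps)
        then show ?thesis using S g33 by (simp add: field_simps)
      qed
      moreover have "g32 / l \<noteq> 0" using notall calculation by auto
      ultimately show ?thesis using pnorm_smul[OF nr l] by blast
    next
      case nq2: False
      have a0: "a \<noteq> 0"
      proof
        assume "a = 0"
        then have "r = smul b q2" using rab by (simp add: vadd_def smul_def split_def)
        then show False using nq2 by blast
      qed
      have b0: "b \<noteq> 0"
      proof
        assume "b = 0"
        then have "r = smul a q1" using rab by (simp add: vadd_def smul_def split_def)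
        then show False using nq1 by blast
      qed
      have "q2 = lc p r w 0 (1/b) (-a/b)"
        unfolding wq rab lc_def vadd_def smul_def using b0 by (simp add: split_def field_simps)
      then have "g32 * (1/b) * (-a/b)^2 = 0" using S[of 0 "1/b" "-a/b"] g33 Fq2 by simp
      then have g32: "g32 = 0" using a0 b0 by simp
      have "Fe 3 c (lc p q1 q2 x y z) = 0" for x y z
      proof -
        have "lc p q1 q2 x y z = lc p r w x (z/b) (y - z*a/b)"
          unfolding wq rab lc_def vadd_def smul_def using b0 by (simp add: split_def field_simps)
        then show ?thesis using S g33 g32 by simp
      qed
      then show ?thesis using notall by blast
    qed
  qed
qed

lemma c000:
  assumes "hform 0 c" "c \<noteq> (\<lambda>_ _ _. 0)"
  shows "c 0 0 0 \<noteq> 0"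
proof
  assume z: "c 0 0 0 = 0"
  have "c = (\<lambda>_ _ _. 0)"
  proof (intro ext)
    fix a b e show "c a b e = 0"
      using assms(1) z by (cases "a + b + e = 0") (auto simp: hform_def)
  qed
  then show False using assms(2) by simp
qed

lemma pencil0: "pencil 0 c q v = [:c 0 0 0:]"
  unfolding pencil_def hmonos0 by simp

lemma bipencil0: "bipencil 0 c p r w = [:[:c 0 0 0:]:]"
  unfolding bipencil_def hmonos0 by simp

lemma no_d0:
  assumes "Z \<noteq> {}" "1 \<le> m"
  shows "\<not> (\<exists>c. in_linsys P 0 c \<and> (\<forall>Q\<in>Z. mult_ge P 0 c m Q))"
proof
  assume "\<exists>c. in_linsys P 0 c \<and> (\<forall>Q\<in>Z. mult_ge P 0 c m Q)"
  then obtain c where c: "in_linsys P 0 c" "\<forall>Q\<in>Z. mult_ge P 0 c m Q" by blast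
  have nz: "c 0 0 0 \<noteq> 0" using c(1) c000 by (simp add: in_linsys_def)
  obtain Q where Q: "Q \<in> Z" using assms(1) by blast
  show False
  proof (cases Q)
    case (Pl q)
    then have "mult_plane_ge 0 c q m" using c(2) Q by (auto simp: mult_ge_def)
    then have "monom 1 m dvd [:c 0 0 0:]" unfolding mult_plane_ge_def pencil0 by blast
    then have "degree (monom (1::complex) m) \<le> degree [:c 0 0 0:]"
      by (rule dvd_imp_degree_le) (use nz in simp)
    then show False using assms(2) by (simp add: degree_monom_eq)
  next
    case (Ex i r)
    then have "\<forall>j l. j + l < m \<longrightarrow> coeff (coeff (bipencil 0 c (P i) r (chartw P i r)) (j + 0)) l = 0"
      using c(2) Q by (auto simp: mult_ge_def Let_def)
    moreover have "0 + 0 < m" using assms(2) by simp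
    ultimately have "coeff (coeff (bipencil 0 c (P i) r (chartw P i r)) (0 + 0)) 0 = 0" by blast
    then have "coeff (coeff (bipencil 0 c (P i) r (chartw P i r)) 0) 0 = 0" by simp
    then show False using nz unfolding bipencil0 by simp
  qed
qed

lemma alpha_eq1:
  assumes "\<exists>c. in_linsys P 1 c \<and> (\<forall>Q\<in>Z. mult_ge P 1 c m Q)" "Z \<noteq> {}" "1 \<le> m"
  shows "alpha P m Z = 1"
  unfolding alpha_def
proof (rule Least_equality)
  show "\<exists>c. in_linsys P 1 c \<and> (\<forall>Q\<in>Z. mult_ge P 1 c m Q)" by (rule assms(1))
next
  fix d assume d: "\<exists>c. in_linsys P d c \<and> (\<forall>Q\<in>Z. mult_ge P d c m Q)"
  show "1 \<le> d"
  proof (rule ccontr)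
    assume "\<not> 1 \<le> d"
    then have "d = 0" by simp
    then show False using d no_d0[OF assms(2,3)] by blast
  qed
qed

lemma alpha1_imp:
  assumes "alpha P m Z = 1" "\<exists>d c. in_linsys P d c \<and> (\<forall>Q\<in>Z. mult_ge P d c m Q)"
  shows "\<exists>c. in_linsys P 1 c \<and> (\<forall>Q\<in>Z. mult_ge P 1 c m Q)"
proof -
  have "\<exists>c. in_linsys P (alpha P m Z) c \<and> (\<forall>Q\<in>Z. mult_ge P (alpha P m Z) c m Q)"
    unfolding alpha_def using assms(2) by (rule LeastI_ex)
  then show ?thesis using assms(1) by simp
qed

lemma mult_ge_mono: "mult_ge P d c m Q \<Longrightarrow> k \<le> m \<Longrightarrow> mult_ge P d c k Q"
proof (cases Q)
  case (Pl q)
  assume "mult_ge P d c m Q" "k \<le> m"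
  then show ?thesis unfolding Pl mult_ge_def s3pt.case by (rule mpg_mono)
next
  case (Ex i r)
  assume "mult_ge P d c m Q" "k \<le> m"
  then show ?thesis unfolding Ex mult_ge_def s3pt.case Let_def by auto
qed

lemma det3_zero_smul: "det3 (smul l x) a b = l * det3 x a b"
  by (simp add: det3_def smul_def split_def algebra_simps)

lemma dets:
  assumes det: "det3 (P 1) (P 2) (P 3) \<noteq> 0"
  shows "det3 (P 2) (P 1) (P 3) \<noteq> 0" "det3 (P 3) (P 1) (P 2) \<noteq> 0" "det3 (P 2) (P 3) (P 1) \<noteq> 0"
    "det3 (P 1) (P 3) (P 2) \<noteq> 0" "det3 (P 3) (P 2) (P 1) \<noteq> 0"
proof -
  have c1: "det3 (P 3) (P 1) (P 2) = det3 (P 1) (P 2) (P 3)" by (metis det3_perm(1))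
  have c2: "det3 (P 2) (P 3) (P 1) = det3 (P 3) (P 1) (P 2)" by (metis det3_perm(1))
  have s1: "det3 (P 2) (P 1) (P 3) = - det3 (P 1) (P 2) (P 3)" by (metis det3_perm(2))
  have s2: "det3 (P 1) (P 3) (P 2) = - det3 (P 3) (P 1) (P 2)" by (metis det3_perm(2))
  have s3: "det3 (P 3) (P 2) (P 1) = - det3 (P 2) (P 3) (P 1)" by (metis det3_perm(2))
  show "det3 (P 2) (P 1) (P 3) \<noteq> 0" "det3 (P 3) (P 1) (P 2) \<noteq> 0" "det3 (P 2) (P 3) (P 1) \<noteq> 0"
    "det3 (P 1) (P 3) (P 2) \<noteq> 0" "det3 (P 3) (P 2) (P 1) \<noteq> 0"
    using det c1 c2 s1 s2 s3 by simp_all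
qed

lemma det_distinct:
  assumes det: "det3 (P 1) (P 2) (P 3) \<noteq> 0"
    and "a \<in> {1,2,3}" "b \<in> {1,2,3}" "c \<in> {1,2,3}" "a \<noteq> b" "a \<noteq> c" "b \<noteq> c"
  shows "det3 (P a) (P b) (P c) \<noteq> 0"
  using assms dets[OF det] by auto

lemma Pnz:
  fixes P :: "nat \<Rightarrow> cpt"
  shows "det3 (P 1) (P 2) (P 3) \<noteq> 0 \<Longrightarrow> j \<in> {1,2,3} \<Longrightarrow> P j \<noteq> (0,0,0)"
  by (auto simp: det3_def split_def)

lemma pnorm_is_smul: "q \<noteq> (0,0,0) \<Longrightarrow> \<exists>l. pnorm q = smul l q"
proof -
  assume nz: "q \<noteq> (0,0,0)"
  obtain q1 q2 q3 where q: "q = (q1,q2,q3)" by (cases q)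
  show ?thesis
  proof (cases "q1 \<noteq> 0")
    case True
    then show ?thesis by (intro exI[of _ "1/q1"]) (simp add: q pnorm_def smul_def)
  next
    case f: False
    show ?thesis
    proof (cases "q2 \<noteq> 0")
      case True
      then show ?thesis using f by (intro exI[of _ "1/q2"]) (simp add: q pnorm_def smul_def)
    next
      case False
      then have "q3 \<noteq> 0" using f nz q by auto
      then show ?thesis using f False by (intro exI[of _ "1/q3"]) (simp add: q pnorm_def smul_def)
    qed
  qed
qed

lemma bipencil_fmul': "n = n1 + n2 \<Longrightarrow> bipencil n (fmul n1 c1 n2 c2) p r w = bipencil n1 c1 p r w * bipencil n2 c2 p r w"
  using bipencil_fmul by simp

lemma hform_fmul': "n = n1 + n2 \<Longrightarrow> hform n (fmul n1 c1 n2 c2)"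
  using hform_fmul by simp

lemma prod_coeff:
  fixes e f1 f2 :: complex
  assumes "j + l < 4"
  shows "coeff (coeff ([: 0, [:0, e:] :] * [: 0, [:0, e:] :] * [: 0, [:f1, f2:] :]) (j+1)) l = 0"
proof -
  have m1: "[: 0, [:0, e:] :] = monom (monom e 1) 1" by (simp add: monom_Suc monom_0)
  have m2: "[: 0, [:f1, f2:] :] = monom [:f1, f2:] 1" by (simp add: monom_Suc monom_0)
  have "[: 0, [:0, e:] :] * [: 0, [:0, e:] :] * [: 0, [:f1, f2:] :] = monom (monom (e*e) (1+1) * [:f1, f2:]) (1+1+1)"
    unfolding m1 m2 by (simp only: mult_monom)
  note eq = this
  have key: "coeff (coeff (monom (monom (e*e) (1+1) * [:f1, f2:]) (1+1+1)) (j+1)) l = 0"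
  proof (cases "1+1+1 = j + 1")
    case True
    then have "l < 1+1" using assms by simp
    have "coeff (monom (monom (e*e) (1+1) * [:f1, f2:]) (1+1+1)) (j+1) = monom (e*e) (1+1) * [:f1, f2:]"
      by (simp only: coeff_monom True if_True refl)
    then show ?thesis using \<open>l < 1+1\<close> by (simp only: coeff_monom_mult if_True)
  next
    case False
    then show ?thesis by (simp only: coeff_monom if_False coeff_0)
  qed
  show ?thesis unfolding eq by (rule key)
qed

lemma witness:
  assumes det: "det3 (P 1) (P 2) (P 3) \<noteq> 0" and i: "i \<in> {1,2,3}" and j: "j \<in> {1,2,3}" and ij: "i \<noteq> j"
  shows "\<exists>c. in_linsys P 1 c \<and> mult_ge P 1 c 4 (Ex i (pnorm (P j)))"
proof -
  define k where "k = 6 - i - j"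
  have k: "k \<in> {1,2,3}" "k \<noteq> i" "k \<noteq> j" using i j ij by (auto simp: k_def)
  define l1 where "l1 = cross (P i) (P j)"
  define l2 where "l2 = cross (P i) (P k)"
  define c where "c = fmul 2 (fmul 1 (lin l1) 1 (lin l1)) 1 (lin l2)"
  have hc: "hform 3 c" unfolding c_def by (rule hform_fmul') simp
  have n1: "l1 \<noteq> (0,0,0)" unfolding l1_def
    by (rule cross_nz[of "P k"]) (rule det_distinct[OF det], use i j k ij in auto)
  have n2: "l2 \<noteq> (0,0,0)" unfolding l2_def
    by (rule cross_nz[of "P j"]) (rule det_distinct[OF det], use i j k ij in auto)
  have "curv 3 c = curv 2 (fmul 1 (lin l1) 1 (lin l1)) * curv 1 (lin l2)"
    unfolding c_def by (rule curv_fmul') simp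
  also have "\<dots> = curv 1 (lin l1) * curv 1 (lin l1) * curv 1 (lin l2)"
    by (subst curv_fmul') simp_all
  finally have "curv 3 c \<noteq> 0" using curv_lin_nz[OF n1] curv_lin_nz[OF n2] by simp
  then have cnz: "c \<noteq> (\<lambda>_ _ _. 0)" by (rule curv_nz_imp)
  have d1: "dot l1 (P i) = 0" "dot l1 (P j) = 0" "dot l2 (P i) = 0" "dot l2 (P k) = 0"
    unfolding l1_def l2_def by (simp_all add: dot_cross det3_rep)
  have mP: "mult_plane_ge 3 c (P m) 1" if m: "m \<in> {1,2,3}" for m
  proof -
    have "m = i \<or> m = j \<or> m = k" using m i j k ij by auto
    then show ?thesis
    proof (elim disjE)
      assume "m = i"
      have "mult_plane_ge 2 (fmul 1 (lin l1) 1 (lin l1)) (P m) 1"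
        by (rule mpg_fmul'[OF mpg_lin mpg0]) (use d1 \<open>m = i\<close> in simp_all)
      then show ?thesis unfolding c_def by (rule mpg_fmul'[OF _ mpg0]) simp_all
    next
      assume "m = j"
      have "mult_plane_ge 2 (fmul 1 (lin l1) 1 (lin l1)) (P m) 1"
        by (rule mpg_fmul'[OF mpg_lin mpg0]) (use d1 \<open>m = j\<close> in simp_all)
      then show ?thesis unfolding c_def by (rule mpg_fmul'[OF _ mpg0]) simp_all
    next
      assume "m = k"
      have "mult_plane_ge 2 (fmul 1 (lin l1) 1 (lin l1)) (P m) 0"
        by (rule mpg_fmul'[OF mpg0 mpg0]) simp_all
      then show ?thesis unfolding c_def by (rule mpg_fmul'[OF _ mpg_lin]) (use d1 \<open>m = k\<close> in simp_all)
    qed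
  qed
  have lin: "in_linsys P 1 c" unfolding in_linsys_def using hc cnz mP by simp
  obtain lam where lam: "pnorm (P j) = smul lam (P j)" using pnorm_is_smul[OF Pnz[OF det j]] by blast
  define r where "r = pnorm (P j)"
  define w where "w = chartw P i r"
  have d2: "dot l1 r = 0" unfolding r_def lam l1_def dot_cross det3_zero_smul by (simp add: det3_rep)
  have "bipencil 3 c (P i) r w = bipencil 1 (lin l1) (P i) r w * bipencil 1 (lin l1) (P i) r w * bipencil 1 (lin l2) (P i) r w"
    unfolding c_def by (simp add: bipencil_fmul')
  also have "\<dots> = [: 0, [:0, dot l1 w:] :] * [: 0, [:0, dot l1 w:] :] * [: 0, [:dot l2 r, dot l2 w:] :]"
    unfolding bipencil_lin using d1 d2 by simp
  finally have bp: "bipencil 3 c (P i) r w = [: 0, [:0, dot l1 w:] :] * [: 0, [:0, dot l1 w:] :] * [: 0, [:dot l2 r, dot l2 w:] :]" .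
  have "mult_ge P 1 c 4 (Ex i r)"
    unfolding mult_ge_def s3pt.case Let_def
  proof (intro allI impI)
    fix j' l :: nat assume "j' + l < 4"
    then show "coeff (coeff (bipencil (3 * 1) c (P i) r (chartw P i r)) (j' + 1)) l = 0"
      using prod_coeff[of j' l] bp unfolding w_def by simp
  qed
  then show ?thesis using lin unfolding r_def by blast
qed

lemma mpg1_Fe: "mult_plane_ge n c q 1 \<Longrightarrow> Fe n c q = 0"
proof -
  assume "mult_plane_ge n c q 1"
  then have "monom 1 1 dvd pencil n c q v" for v unfolding mult_plane_ge_def by blast
  then obtain R where "pencil n c q (0,0,0) = monom 1 1 * R" by (blast elim: dvdE)
  then have "poly (pencil n c q (0,0,0)) 0 = 0" by (simp add: monom_Suc monom_0)
  then show ?thesis by (simp add: poly_pencil vid5)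
qed

definition comp3 :: "nat \<Rightarrow> complex \<Rightarrow> complex \<Rightarrow> complex \<Rightarrow> complex" where
  "comp3 n x1 x2 x3 = (if n = 1 then x1 else if n = 2 then x2 else x3)"

definition mono3 :: "nat \<Rightarrow> nat \<Rightarrow> complex \<Rightarrow> complex \<Rightarrow> complex \<Rightarrow> complex" where
  "mono3 i j x1 x2 x3 = comp3 j x1 x2 x3 * (comp3 (6 - i - j) x1 x2 x3)^2"

lemma lc_swap1: "lc a b c x y z = lc b a c y x z"
  unfolding lc_def vadd_def smul_def by (simp add: split_def algebra_simps)

lemma lc_swap2: "lc a b c x y z = lc c a b z x y"
  unfolding lc_def vadd_def smul_def by (simp add: split_def algebra_simps)

lemma conv1:
  assumes i: "i \<in> {1,2,3}"
    and f: "\<forall>x y z. Fe 3 c (lc (P i) (P (oth1 i)) (P (oth2 i)) x y z) = \<alpha> * y * z^2"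
  shows "Fe 3 c (lc (P 1) (P 2) (P 3) x1 x2 x3) = \<alpha> * mono3 i (oth1 i) x1 x2 x3"
proof -
  consider "i = 1" | "i = 2" | "i = 3" using i by blast
  then show ?thesis
  proof cases
    case 1
    then show ?thesis using f[rule_format, of x1 x2 x3] by (simp add: oth1_def oth2_def mono3_def comp3_def)
  next
    case 2
    then show ?thesis using f[rule_format, of x2 x1 x3] lc_swap1[of "P 1" "P 2" "P 3" x1 x2 x3]
      by (simp add: oth1_def oth2_def mono3_def comp3_def)
  next
    case 3
    then show ?thesis using f[rule_format, of x3 x1 x2] lc_swap2[of "P 1" "P 2" "P 3" x1 x2 x3]
      by (simp add: oth1_def oth2_def mono3_def comp3_def)
  qed
qed

lemma conv2:
  assumes i: "i \<in> {1,2,3}"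
    and f: "\<forall>x y z. Fe 3 c (lc (P i) (P (oth1 i)) (P (oth2 i)) x y z) = \<alpha> * z * y^2"
  shows "Fe 3 c (lc (P 1) (P 2) (P 3) x1 x2 x3) = \<alpha> * mono3 i (oth2 i) x1 x2 x3"
proof -
  consider "i = 1" | "i = 2" | "i = 3" using i by blast
  then show ?thesis
  proof cases
    case 1
    then show ?thesis using f[rule_format, of x1 x2 x3] by (simp add: oth1_def oth2_def mono3_def comp3_def)
  next
    case 2
    then show ?thesis using f[rule_format, of x2 x1 x3] lc_swap1[of "P 1" "P 2" "P 3" x1 x2 x3]
      by (simp add: oth1_def oth2_def mono3_def comp3_def)
  next
    case 3
    then show ?thesis using f[rule_format, of x3 x1 x2] lc_swap2[of "P 1" "P 2" "P 3" x1 x2 x3]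
      by (simp add: oth1_def oth2_def mono3_def comp3_def)
  qed
qed

lemma oth_facts: "i \<in> {1,2,3} \<Longrightarrow> oth1 i \<in> {1,2,3} \<and> oth2 i \<in> {1,2,3} \<and> oth1 i \<noteq> i \<and> oth2 i \<noteq> i \<and> oth1 i \<noteq> oth2 i"
  by (auto simp: oth1_def oth2_def)

lemma classify:
  assumes det: "det3 (P 1) (P 2) (P 3) \<noteq> 0" and lin: "in_linsys P 1 c"
    and mg: "mult_ge P 1 c 4 Q" and S: "in_S3 P Q"
  shows "\<exists>i j \<alpha>. i \<in> {1,2,3} \<and> j \<in> {1,2,3} \<and> i \<noteq> j \<and> Q = Ex i (pnorm (P j)) \<and> \<alpha> \<noteq> 0 \<and>
     (\<forall>x1 x2 x3. Fe 3 c (lc (P 1) (P 2) (P 3) x1 x2 x3) = \<alpha> * mono3 i j x1 x2 x3)"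
proof -
  have hf: "hform 3 c" and cnz: "c \<noteq> (\<lambda>_ _ _. 0)" and mp: "\<And>m. m \<in> {1,2,3} \<Longrightarrow> mult_plane_ge 3 c (P m) 1"
    using lin by (auto simp: in_linsys_def)
  have Fm: "Fe 3 c (P m) = 0" if "m \<in> {1,2,3}" for m using mp[OF that] by (rule mpg1_Fe)
  show ?thesis
  proof (cases Q)
    case (Pl q)
    then have "mult_plane_ge 3 c q 4" using mg by (simp add: mult_ge_def)
    then have "Fe 3 c x = 0" for x by (rule pl_case)
    then have "c = (\<lambda>_ _ _. 0)" by (rule ident3[OF hf])
    then show ?thesis using cnz by simp
  next
    case (Ex i r)
    have i: "i \<in> {1,2,3}" and nr: "normalized r"
      and rab: "\<exists>a b. r = vadd (smul a (P (oth1 i))) (smul b (P (oth2 i)))"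
      using S unfolding Ex in_S3_def by auto
    obtain a b where rab': "r = vadd (smul a (P (oth1 i))) (smul b (P (oth2 i)))" using rab by blast
    have cond: "\<forall>j l. j + l < 4 \<longrightarrow> coeff (coeff (bipencil 3 c (P i) r (chartw P i r)) (j+1)) l = 0"
      using mg unfolding Ex mult_ge_def s3pt.case Let_def by simp
    have of: "oth1 i \<in> {1,2,3}" "oth2 i \<in> {1,2,3}" "oth1 i \<noteq> i" "oth2 i \<noteq> i" "oth1 i \<noteq> oth2 i"
      using oth_facts[OF i] by auto
    have dt: "det3 (P i) (P (oth1 i)) (P (oth2 i)) \<noteq> 0"
      by (rule det_distinct[OF det i of(1) of(2)]) (use of in auto)
    have w: "chartw P i r = (if \<exists>l. r = smul l (P (oth1 i)) then P (oth2 i) else P (oth1 i))"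
      by (simp add: chartw_def)
    obtain \<alpha> where a0: "\<alpha> \<noteq> 0" and disj:
      "(r = pnorm (P (oth1 i)) \<and> (\<forall>x y z. Fe 3 c (lc (P i) (P (oth1 i)) (P (oth2 i)) x y z) = \<alpha> * y * z^2)) \<or>
       (r = pnorm (P (oth2 i)) \<and> (\<forall>x y z. Fe 3 c (lc (P i) (P (oth1 i)) (P (oth2 i)) x y z) = \<alpha> * z * y^2))"
      using ex_cases[OF dt hf cnz Fm[OF i] Fm[OF of(1)] Fm[OF of(2)] nr rab' w cond] by blast
    then show ?thesis
    proof (elim disjE conjE)
      assume r: "r = pnorm (P (oth1 i))"
        and f: "\<forall>x y z. Fe 3 c (lc (P i) (P (oth1 i)) (P (oth2 i)) x y z) = \<alpha> * y * z^2"
      show ?thesis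
        by (rule exI[of _ i], rule exI[of _ "oth1 i"], rule exI[of _ \<alpha>])
          (use i of a0 Ex r conv1[OF i f] in auto)
    next
      assume r: "r = pnorm (P (oth2 i))"
        and f: "\<forall>x y z. Fe 3 c (lc (P i) (P (oth1 i)) (P (oth2 i)) x y z) = \<alpha> * z * y^2"
      show ?thesis
        by (rule exI[of _ i], rule exI[of _ "oth2 i"], rule exI[of _ \<alpha>])
          (use i of a0 Ex r conv2[OF i f] in auto)
    qed
  qed
qed

lemma mono_inj:
  assumes "i \<in> {1,2,3}" "j \<in> {1,2,3}" "i' \<in> {1,2,3}" "j' \<in> {1,2,3}" "i \<noteq> j" "i' \<noteq> j'"
    and a0: "\<alpha> \<noteq> 0"
    and eq: "\<And>x1 x2 x3. \<alpha> * mono3 i j x1 x2 x3 = \<alpha>' * mono3 i' j' x1 x2 x3"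
  shows "i = i' \<and> j = j'"
proof -
  have m1: "mono3 a b 1 1 1 = 1" for a b by (simp add: mono3_def comp3_def)
  have "\<alpha> = \<alpha>'" using eq[of 1 1 1] by (simp add: m1)
  then have v: "mono3 i j 1 2 5 = mono3 i' j' 1 2 5" using eq[of 1 2 5] a0 by simp
  show ?thesis using assms(1-6) v by (auto simp: mono3_def comp3_def)
qed

theorem theorem8:
  fixes P :: "nat \<Rightarrow> cpt" and Z :: "s3pt set"
  assumes "det3 (P 1) (P 2) (P 3) \<noteq> 0"
    and "finite Z" and "Z \<noteq> {}" and "\<forall>Q\<in>Z. in_S3 P Q"
  shows "(alpha P 1 Z = 1 \<and> alpha P 2 Z = 1 \<and> alpha P 3 Z = 1 \<and> alpha P 4 Z = 1)
    \<longleftrightarrow> (\<exists>i j. i \<in> {1,2,3} \<and> j \<in> {1,2,3} \<and> i \<noteq> j \<and> Z = {Ex i (pnorm (P j))})"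
proof
  assume H: "alpha P 1 Z = 1 \<and> alpha P 2 Z = 1 \<and> alpha P 3 Z = 1 \<and> alpha P 4 Z = 1"
  have H4: "alpha P 4 Z = 1" using H by blast
  obtain c where lin: "in_linsys P 1 c" and mg: "\<forall>Q\<in>Z. mult_ge P 1 c 4 Q"
    using alpha1_imp[OF H4 exist_sys[OF assms(1,2,4), of 4]] by blast
  obtain Q0 where Q0: "Q0 \<in> Z" using assms(3) by blast
  obtain i j \<alpha> where ij: "i \<in> {1,2,3}" "j \<in> {1,2,3}" "i \<noteq> j" "Q0 = Ex i (pnorm (P j))" "\<alpha> \<noteq> 0"
    and f: "\<forall>x1 x2 x3. Fe 3 c (lc (P 1) (P 2) (P 3) x1 x2 x3) = \<alpha> * mono3 i j x1 x2 x3"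
    using classify[OF assms(1) lin bspec[OF mg Q0] bspec[OF assms(4) Q0]] by blast
  have "Z = {Ex i (pnorm (P j))}"
  proof
    show "Z \<subseteq> {Ex i (pnorm (P j))}"
    proof
      fix Q assume Q: "Q \<in> Z"
      obtain i' j' \<alpha>' where ij': "i' \<in> {1,2,3}" "j' \<in> {1,2,3}" "i' \<noteq> j'" "Q = Ex i' (pnorm (P j'))"
        and f': "\<forall>x1 x2 x3. Fe 3 c (lc (P 1) (P 2) (P 3) x1 x2 x3) = \<alpha>' * mono3 i' j' x1 x2 x3"
        using classify[OF assms(1) lin bspec[OF mg Q] bspec[OF assms(4) Q]] by blast
      have e: "\<alpha> * mono3 i j x1 x2 x3 = \<alpha>' * mono3 i' j' x1 x2 x3" for x1 x2 x3
        using f[rule_format, of x1 x2 x3] f'[rule_format, of x1 x2 x3] by simp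
      have "i = i' \<and> j = j'"
        by (rule mono_inj[OF ij(1,2) ij'(1,2) ij(3) ij'(3) ij(5) e])
      then show "Q \<in> {Ex i (pnorm (P j))}" using ij'(4) by simp
    qed
    show "{Ex i (pnorm (P j))} \<subseteq> Z" using Q0 ij(4) by simp
  qed
  then show "\<exists>i j. i \<in> {1,2,3} \<and> j \<in> {1,2,3} \<and> i \<noteq> j \<and> Z = {Ex i (pnorm (P j))}"
    using ij by blast
next
  assume "\<exists>i j. i \<in> {1,2,3} \<and> j \<in> {1,2,3} \<and> i \<noteq> j \<and> Z = {Ex i (pnorm (P j))}"
  then obtain i j where ij: "i \<in> {1,2,3}" "j \<in> {1,2,3}" "i \<noteq> j" and Z: "Z = {Ex i (pnorm (P j))}" by blast
  obtain c where lin: "in_linsys P 1 c" and mg: "mult_ge P 1 c 4 (Ex i (pnorm (P j)))"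
    using witness[OF assms(1) ij] by blast
  have "alpha P m Z = 1" if "1 \<le> m" "m \<le> 4" for m
  proof (rule alpha_eq1)
    show "\<exists>c. in_linsys P 1 c \<and> (\<forall>Q\<in>Z. mult_ge P 1 c m Q)"
      using lin mult_ge_mono[OF mg that(2)] Z by blast
  qed (use that assms(3) in auto)
  then show "alpha P 1 Z = 1 \<and> alpha P 2 Z = 1 \<and> alpha P 3 Z = 1 \<and> alpha P 4 Z = 1" by simp
qed

end
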